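(* Let $q$ be a prime power and $n,k,\gamma$ positive integers with $n\ge2k+\gamma$. Then $$B_q(n,k,k+\gamma;3)\ge q^{\left\lfloor\frac{n-2k+1}{k+1}\right\rfloor\left\lfloor\frac{k}{\gamma}\right\rfloor}.$$
   Context: For a prime power $q$, $\mathcal{G}_q(n,k)$ denotes the set of all $k$-dimensional subspaces of $\mathbb{F}_q^n$. An $\alpha$-$(n,k,\delta)_q^c$ covering Grassmannian code is a subset $\mathcal{C}\subseteq\mathcal{G}_q(n,k)$ (no repeated codewords) such that every set of $\alpha$ distinct codewords of $\mathcal{C}$ spans a subspace of $\mathbb{F}_q^n$ of dimension at least $k+\delta$. $B_q(n,k,\delta;\alpha)$ denotes the maximum size of an $\alpha$-$(n,k,\delta)_q^c$ code. *)

theory Defs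
  imports Main "HOL.Vector_Spaces" "HOL-Library.Function_Algebras"
begin

text \<open>Vectors of F^n are modelled as functions nat => F vanishing outside {0..<n}.
  The field F_q is a finite field type 'a with q = CARD('a).\<close>

definition vscale :: "'a::field \<Rightarrow> (nat \<Rightarrow> 'a) \<Rightarrow> (nat \<Rightarrow> 'a)" where
  "vscale c v = (\<lambda>i. c * v i)"

definition ambient :: "nat \<Rightarrow> (nat \<Rightarrow> 'a::field) set" where
  "ambient n = {v. \<forall>i\<ge>n. v i = 0}"

definition vdim :: "(nat \<Rightarrow> 'a::field) set \<Rightarrow> nat" where
  "vdim S = vector_space.dim vscale S"

definition vspan :: "(nat \<Rightarrow> 'a::field) set \<Rightarrow> (nat \<Rightarrow> 'a) set" where
  "vspan S = module.span vscale S"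

definition grassmannian :: "nat \<Rightarrow> nat \<Rightarrow> (nat \<Rightarrow> 'a::field) set set" where
  "grassmannian n k = {S. module.subspace vscale S \<and> S \<subseteq> ambient n \<and> vdim S = k}"

definition covering_code :: "nat \<Rightarrow> nat \<Rightarrow> nat \<Rightarrow> nat \<Rightarrow> (nat \<Rightarrow> 'a::field) set set \<Rightarrow> bool" where
  "covering_code \<alpha> n k \<delta> C \<longleftrightarrow> C \<subseteq> grassmannian n k \<and>
     (\<forall>A\<subseteq>C. card A = \<alpha> \<longrightarrow> vdim (vspan (\<Union>A)) \<ge> k + \<delta>)"

definition B :: "'a::{finite,field} itself \<Rightarrow> nat \<Rightarrow> nat \<Rightarrow> nat \<Rightarrow> nat \<Rightarrow> nat" where
  "B _ n k \<delta> \<alpha> = Sup {card C | C. covering_code \<alpha> n k \<delta> (C :: (nat \<Rightarrow> 'a) set set)}"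

end

theory Submission
  imports Defs
begin

lemma vs: "vector_space (vscale :: 'a::field \<Rightarrow> (nat \<Rightarrow> 'a) \<Rightarrow> _)"
  by unfold_locales (auto simp: vscale_def fun_eq_iff algebra_simps)

interpretation V: vector_space "vscale :: 'a::field \<Rightarrow> (nat \<Rightarrow> 'a) \<Rightarrow> (nat \<Rightarrow> 'a)"
  by (rule vs)

lemma vscale_apply[simp]: "vscale c v i = c * v i"
  by (simp add: vscale_def)

lemma sum_vscale_apply:
  fixes u :: "(nat \<Rightarrow> 'a::field) \<Rightarrow> 'a"
  assumes "finite t"
  shows "(\<Sum>v\<in>t. vscale (u v) v) i = (\<Sum>v\<in>t. u v * v i)"
  using assms by (induction t rule: finite_induct) auto

lemma indep_pivot:
  fixes S :: "(nat \<Rightarrow> 'a::field) set" and pv :: "(nat \<Rightarrow> 'a) \<Rightarrow> nat"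
  assumes piv: "\<And>v. v \<in> S \<Longrightarrow> v (pv v) \<noteq> 0 \<and> (\<forall>i<pv v. v i = 0)"
    and inj: "inj_on pv S"
  shows "\<not> V.dependent S"
proof
  assume "V.dependent S"
  then obtain t u v where t: "finite t" "t \<subseteq> S" "(\<Sum>v\<in>t. vscale (u v) v) = 0" "v \<in> t" "u v \<noteq> 0"
    unfolding V.dependent_explicit by blast
  define T' where "T' = {w \<in> t. u w \<noteq> 0}"
  have fT: "finite T'" "T' \<noteq> {}" using t by (auto simp: T'_def)
  obtain w0 where w0: "w0 \<in> T'" "\<forall>w\<in>T'. pv w0 \<le> pv w"
    using ex_has_least_nat[of "\<lambda>w. w \<in> T'" _ pv] fT(2) by blast
  have "(\<Sum>v\<in>t. vscale (u v) v) (pv w0) = (\<Sum>v\<in>t. u v * v (pv w0))"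
    by (rule sum_vscale_apply[OF t(1)])
  also have "\<dots> = (\<Sum>v\<in>{w0}. u v * v (pv w0))"
  proof (rule sum.mono_neutral_right)
    show "finite t" by fact
    show "{w0} \<subseteq> t" using w0 by (auto simp: T'_def)
    show "\<forall>i\<in>t - {w0}. u i * i (pv w0) = 0"
    proof
      fix w assume w: "w \<in> t - {w0}"
      show "u w * w (pv w0) = 0"
      proof (cases "u w = 0")
        case False
        then have "w \<in> T'" using w by (auto simp: T'_def)
        then have "pv w0 \<le> pv w" using w0 by auto
        moreover have "pv w \<noteq> pv w0"
          using inj w w0(1) t(2) unfolding inj_on_def T'_def by blast
        ultimately have "pv w0 < pv w" by simp
        then have "w (pv w0) = 0" using piv[of w] w t(2) by blast
        then show ?thesis by simp
      qed simp
    qed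
  qed
  also have "\<dots> \<noteq> 0" using w0 piv[of w0] t(2) by (auto simp: T'_def)
  finally show False using t(3) by simp
qed

lemma card_le_dim_span:
  fixes S G :: "(nat \<Rightarrow> 'a::field) set"
  assumes "finite G" "\<not> V.dependent S" "S \<subseteq> V.span G"
  shows "card S \<le> V.dim (V.span G)"
proof -
  obtain B where B: "B \<subseteq> V.span G" "\<not> V.dependent B" "V.span G \<subseteq> V.span B" "card B = V.dim (V.span G)"
    using V.basis_exists by blast
  have "finite B" using V.independent_span_bound[OF assms(1) B(2) B(1)] by simp
  have "S \<subseteq> V.span B" using assms(3) B(3) by blast
  then show ?thesis using V.independent_span_bound[OF \<open>finite B\<close> assms(2)] B(4) by simp
qed

lemma least_nz:
  fixes f :: "nat \<Rightarrow> 'a::zero"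
  assumes "\<exists>j<p. f j \<noteq> 0"
  shows "\<exists>j0<p. f j0 \<noteq> 0 \<and> (\<forall>j<j0. f j = 0)"
proof -
  obtain j0 where j0: "j0 < p \<and> f j0 \<noteq> 0" "\<forall>j<j0. \<not> (j < p \<and> f j \<noteq> 0)"
    using assms exists_least_iff[of "\<lambda>j. j < p \<and> f j \<noteq> 0"] by blast
  then show ?thesis by (metis order.strict_trans)
qed

lemma pivots_indep:
  fixes w :: "nat \<Rightarrow> nat \<Rightarrow> 'a::field"
  assumes w: "\<And>P. P \<in> Pos \<Longrightarrow> w P P \<noteq> 0 \<and> (\<forall>i<P. w P i = 0)"
  shows "\<not> V.dependent (w ` Pos) \<and> inj_on w Pos"
proof -
  define pv :: "(nat \<Rightarrow> 'a) \<Rightarrow> nat" where "pv v = (LEAST i. v i \<noteq> 0)" for v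
  have pvw: "pv (w P) = P" if "P \<in> Pos" for P
    unfolding pv_def using w[OF that] by (intro Least_equality) (auto simp: not_less[symmetric])
  have inj: "inj_on w Pos" by (metis inj_onI pvw)
  have "\<not> V.dependent (w ` Pos)"
  proof (rule indep_pivot[where pv = pv])
    show "v (pv v) \<noteq> 0 \<and> (\<forall>i<pv v. v i = 0)" if "v \<in> w ` Pos" for v
      using that w pvw by auto
    show "inj_on pv (w ` Pos)" by (smt (verit) imageE inj_onI pvw)
  qed
  then show ?thesis using inj by simp
qed

lemma dim_ge_pivots:
  fixes G :: "(nat \<Rightarrow> 'a::field) set"
  assumes "finite G" "finite Pos"
    and ex: "\<And>P. P \<in> Pos \<Longrightarrow> \<exists>w \<in> V.span G. w P \<noteq> 0 \<and> (\<forall>i<P. w i = 0)"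
  shows "card Pos \<le> V.dim (V.span G)"
proof -
  obtain w where w: "\<And>P. P \<in> Pos \<Longrightarrow> w P \<in> V.span G \<and> w P P \<noteq> 0 \<and> (\<forall>i<P. w P i = 0)"
    using ex by metis
  define pv :: "(nat \<Rightarrow> 'a) \<Rightarrow> nat" where "pv v = (LEAST i. v i \<noteq> 0)" for v
  have pvw: "pv (w P) = P" if "P \<in> Pos" for P
    unfolding pv_def using w[OF that] by (intro Least_equality) (auto simp: not_less[symmetric])
  have inj: "inj_on w Pos" by (metis inj_onI pvw)
  have "\<not> V.dependent (w ` Pos)"
  proof (rule indep_pivot[where pv = pv])
    show "v (pv v) \<noteq> 0 \<and> (\<forall>i<pv v. v i = 0)" if "v \<in> w ` Pos" for v
      using that w pvw by auto
    show "inj_on pv (w ` Pos)" by (smt (verit) imageE inj_onI pvw)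
  qed
  moreover have "w ` Pos \<subseteq> V.span G" using w by auto
  ultimately have "card (w ` Pos) \<le> V.dim (V.span G)"
    using card_le_dim_span[OF assms(1)] by blast
  then show ?thesis using card_image[OF inj] by simp
qed

lemma two_vals:
  fixes d e :: "nat \<Rightarrow> 'a::field"
  assumes d: "\<exists>j<p. d j \<noteq> 0" and ne: "\<not> (\<exists>c. \<forall>j<p. e j = c * d j)"
  shows "\<exists>a1 b1 a2 b2 j1 j2. j1 < j2 \<and> j2 < p \<and>
    a1 * d j1 + b1 * e j1 \<noteq> 0 \<and> (\<forall>j<j1. a1 * d j + b1 * e j = 0) \<and>
    a2 * d j2 + b2 * e j2 \<noteq> 0 \<and> (\<forall>j<j2. a2 * d j + b2 * e j = 0)"
proof -
  obtain jd where jd: "jd < p" "d jd \<noteq> 0" "\<forall>j<jd. d j = 0" using least_nz[OF d] by blast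
  have "\<exists>j<p. e j \<noteq> 0" using ne by (metis mult_zero_left)
  then obtain je where je: "je < p" "e je \<noteq> 0" "\<forall>j<je. e j = 0" using least_nz by blast
  consider "jd < je" | "je < jd" | "jd = je" by linarith
  then show ?thesis
  proof cases
    case 1
    show ?thesis
      by (rule exI[of _ 1], rule exI[of _ 0], rule exI[of _ 0], rule exI[of _ 1],
          rule exI[of _ jd], rule exI[of _ je]) (use 1 jd je in auto)
  next
    case 2
    show ?thesis
      by (rule exI[of _ 0], rule exI[of _ 1], rule exI[of _ 1], rule exI[of _ 0],
          rule exI[of _ je], rule exI[of _ jd]) (use 2 jd je in auto)
  next
    case 3
    define c where "c = e jd / d jd"
    define f where "f l = - c * d l + 1 * e l" for l
    have "\<exists>l<p. f l \<noteq> 0"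
    proof (rule ccontr)
      assume "\<not> (\<exists>l<p. f l \<noteq> 0)"
      then have "\<forall>l<p. e l = c * d l" by (auto simp: f_def)
      then show False using ne by blast
    qed
    then obtain j2 where j2: "j2 < p" "f j2 \<noteq> 0" "\<forall>j<j2. f j = 0" using least_nz by blast
    have fz: "f l = 0" if "l \<le> jd" for l
    proof (cases "l = jd")
      case True then show ?thesis using jd(2) by (simp add: f_def c_def)
    next
      case False then show ?thesis using that jd je 3 by (simp add: f_def)
    qed
    have "jd < j2" using fz j2(2) by (meson not_le)
    show ?thesis
      by (rule exI[of _ 1], rule exI[of _ 0], rule exI[of _ "-c"], rule exI[of _ 1],
          rule exI[of _ jd], rule exI[of _ j2]) (use \<open>jd < j2\<close> jd j2 in \<open>auto simp: f_def\<close>)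
  qed
qed

lemma card3int:
  assumes "k \<le> (a::nat)" "a + k \<le> c"
  shows "card ({..<k} \<union> {a..<a+k} \<union> {c..<c+g}) = k + k + g"
proof -
  have "card ({..<k} \<union> {a..<a+k}) = k + k"
    using assms by (subst card_Un_disjoint) auto
  then show ?thesis
    using assms by (subst card_Un_disjoint) auto
qed


locale cons =
  fixes n k g m t :: nat
  assumes kpos: "0 < k" and gpos: "0 < g" and gk: "g \<le> k" and tg: "t * g \<le> k"
    and mn: "m * (k+1) + 2*k \<le> n + 1"
begin

definition "p = t * m"
definition "b = 2*k + m*k - g"
definition Lal :: "nat \<Rightarrow> nat \<Rightarrow> bool" where
  "Lal i pos \<longleftrightarrow> k + i \<le> pos \<and> pos < b \<and> g dvd (pos - k - i) \<and> (pos - k - i) div g < p"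
definition "Lidx i pos = (pos - k - i) div g"
definition Qal :: "nat \<Rightarrow> nat \<Rightarrow> bool" where
  "Qal i pos \<longleftrightarrow> i < t * g \<and> b + i mod g \<le> pos \<and> pos - b - i mod g < m"
definition "Qidx i pos = (i div g) * m + (pos - b - i mod g)"
definition ent :: "(nat \<Rightarrow> 'a::field) \<Rightarrow> nat \<Rightarrow> nat \<Rightarrow> 'a" where
  "ent x i pos = (if pos = i then 1 else 0) + (if Lal i pos then x (Lidx i pos) else 0)
     + (if Qal i pos then (x (Qidx i pos))^2 else 0)"
definition u :: "(nat \<Rightarrow> 'a::field) \<Rightarrow> nat \<Rightarrow> (nat \<Rightarrow> 'a)" where
  "u x i = ent x i"
definition cw :: "(nat \<Rightarrow> 'a::field) \<Rightarrow> (nat \<Rightarrow> 'a) set" where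
  "cw x = vspan (u x ` {..<k})"

lemma gp: "g * p \<le> m * k"
proof -
  have "g * p = (t * g) * m" by (simp add: p_def)
  also have "\<dots> \<le> k * m" using tg by simp
  finally show ?thesis by (simp add: mult.commute)
qed

lemma Lal_lt_b: "Lal i pos \<Longrightarrow> pos < b" and Lal_ge: "Lal i pos \<Longrightarrow> k \<le> pos"
  by (auto simp: Lal_def)

lemma Lidx_lt: "Lal i pos \<Longrightarrow> Lidx i pos < p"
  by (auto simp: Lal_def Lidx_def)

lemma Qal_ge: "Qal i pos \<Longrightarrow> b \<le> pos"
  by (auto simp: Qal_def)

lemma Qidx_lt: assumes "Qal i pos" shows "Qidx i pos < p"
proof -
  have r: "i div g < t" using assms by (auto simp: Qal_def less_mult_imp_div_less)
  have l: "pos - b - i mod g < m" using assms by (auto simp: Qal_def)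
  have "Qidx i pos < (i div g) * m + m" using l by (simp add: Qidx_def)
  also have "\<dots> = (i div g + 1) * m" by simp
  also have "\<dots> \<le> t * m" using r by (intro mult_le_mono1) simp
  finally show ?thesis by (simp add: p_def)
qed

lemma b_le_n: assumes "0 < m" shows "b \<le> n"
  using mn assms gpos by (simp add: b_def distrib_left)

lemma Lal_lt_n: assumes "Lal i pos" shows "pos < n"
proof -
  have "0 < p" using Lidx_lt[OF assms] by simp
  then have "0 < m" by (simp add: p_def)
  then show ?thesis using b_le_n Lal_lt_b[OF assms] by simp
qed

lemma Qal_lt_n: assumes "Qal i pos" shows "pos < n"
proof -
  have l: "pos - b - i mod g < m" and ge: "b + i mod g \<le> pos" using assms by (auto simp: Qal_def)
  have "i mod g < g" using gpos by simp
  then have "pos < b + g + m - 1" using l ge by linarith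
  moreover have "b + g + m - 1 \<le> n" using mn gk gpos l by (simp add: b_def distrib_left)
  ultimately show ?thesis by simp
qed

lemma ent_supp: assumes "i < k" "n \<le> pos" shows "ent x i pos = 0"
proof -
  have "\<not> Lal i pos" "\<not> Qal i pos" using Lal_lt_n Qal_lt_n assms(2) not_le by blast+
  moreover have "pos \<noteq> i" using assms mn by linarith
  ultimately show ?thesis by (simp add: ent_def)
qed

lemma ent_low: assumes "pos < k" shows "ent x i pos = (if pos = i then 1 else 0)"
proof -
  have "\<not> Lal i pos" using Lal_ge assms not_le by blast
  moreover have "\<not> Qal i pos" using Qal_ge[of i pos] assms gk by (auto simp: b_def)
  ultimately show ?thesis by (simp add: ent_def)
qed

lemma combo_apply:
  "(vscale a (u y i - u x i) + vscale c (u z i - u x i)) pos =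
     (if Lal i pos then a * (y (Lidx i pos) - x (Lidx i pos)) + c * (z (Lidx i pos) - x (Lidx i pos)) else 0)
   + (if Qal i pos then a * ((y (Qidx i pos))^2 - (x (Qidx i pos))^2) + c * ((z (Qidx i pos))^2 - (x (Qidx i pos))^2) else 0)"
  by (simp add: u_def ent_def algebra_simps)

lemma u_self: "i < k \<Longrightarrow> u x i i = 1"
  by (simp add: u_def ent_low)

lemma u_low: "pos < k \<Longrightarrow> u x i pos = (if pos = i then 1 else 0)"
  by (simp add: u_def ent_low)

lemma u_amb: "i < k \<Longrightarrow> u x i \<in> ambient n"
  by (simp add: ambient_def u_def ent_supp)

lemma u_indep: "\<not> V.dependent (u x ` {..<k}) \<and> inj_on (u x) {..<k}"
  by (rule pivots_indep) (auto simp: u_low)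

lemma sub_amb: "V.subspace (ambient n :: (nat \<Rightarrow> 'a::field) set)"
  by (auto simp: V.subspace_def ambient_def)

lemma cw_grass: "cw x \<in> grassmannian n k"
proof -
  have "cw x \<subseteq> ambient n"
    unfolding cw_def vspan_def by (rule V.span_minimal) (use u_amb sub_amb in auto)
  moreover have "vdim (cw x) = k"
    using u_indep[of x] unfolding cw_def vdim_def vspan_def
    by (simp add: V.dim_eq_card_independent card_image)
  ultimately show ?thesis by (simp add: grassmannian_def cw_def vspan_def)
qed

lemma ent_cong: assumes "\<forall>j<p. x j = y j" shows "ent x i pos = ent y i pos"
  using assms Lidx_lt Qidx_lt by (simp add: ent_def)

lemma cw_cong: assumes "\<forall>j<p. x j = y j" shows "cw x = cw y"
proof -
  have "u x = u y" using ent_cong[OF assms] by (auto simp: u_def fun_eq_iff)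
  then show ?thesis by (simp add: cw_def)
qed

lemma sum_delta_u:
  assumes "l < k"
  shows "(\<Sum>i<k. vscale (if i = l then 1 else 0) (u x i)) = u x l"
proof -
  have "(\<Sum>i<k. vscale (if i = l then 1 else 0) (u x i)) = (\<Sum>i<k. if i = l then u x i else 0)"
    by (rule sum.cong) (auto simp: vscale_def fun_eq_iff)
  also have "\<dots> = u x l" using assms by simp
  finally show ?thesis .
qed

lemma span_repr:
  assumes "v \<in> vspan (u x ` {..<k})"
  shows "v = (\<Sum>i<k. vscale (v i) (u x i))"
proof -
  define W where "W = {v. v = (\<Sum>i<k. vscale (v i) (u x i))}"
  have "V.subspace W"
    unfolding V.subspace_def W_def Ball_def mem_Collect_eq
    apply (intro conjI allI impI)
    subgoal by (simp add: vscale_def fun_eq_iff)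
    subgoal for v w
    proof -
      assume hv: "v = (\<Sum>i<k. vscale (v i) (u x i))" and hw: "w = (\<Sum>i<k. vscale (w i) (u x i))"
      have "(\<Sum>i<k. vscale ((v + w) i) (u x i)) = (\<Sum>i<k. vscale (v i) (u x i)) + (\<Sum>i<k. vscale (w i) (u x i))"
        by (simp add: V.scale_left_distrib sum.distrib)
      also have "\<dots> = v + w" by (simp only: hv[symmetric] hw[symmetric])
      finally show ?thesis by simp
    qed
    subgoal for c v
    proof -
      assume hv: "v = (\<Sum>i<k. vscale (v i) (u x i))"
      have "(\<Sum>i<k. vscale (vscale c v i) (u x i)) = vscale c (\<Sum>i<k. vscale (v i) (u x i))"
        by (simp add: V.scale_sum_right V.scale_scale)
      also have "\<dots> = vscale c v" by (simp only: hv[symmetric])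
      finally show ?thesis by simp
    qed
    done
  moreover have "u x ` {..<k} \<subseteq> W"
  proof
    fix v assume "v \<in> u x ` {..<k}"
    then obtain l where l: "l < k" "v = u x l" by auto
    have "(\<Sum>i<k. vscale (v i) (u x i)) = (\<Sum>i<k. vscale (if i = l then 1 else 0) (u x i))"
      using l by (intro sum.cong) (auto simp: u_low)
    then show "v \<in> W" using sum_delta_u[OF l(1), of x] l by (simp add: W_def)
  qed
  ultimately have "vspan (u x ` {..<k}) \<subseteq> W" unfolding vspan_def by (rule V.span_minimal[rotated])
  then show ?thesis using assms W_def by auto
qed

lemma Lal_0: assumes "j < p" shows "Lal 0 (k + g * j)" "Lidx 0 (k + g * j) = j"
proof -
  have "g * j + g \<le> g * p" using assms by (metis Suc_leI add.commute mult_Suc_right mult_le_mono2)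
  then have "g * j + g \<le> m * k" using gp by simp
  then have "k + g * j < b" using kpos gk by (simp add: b_def)
  then show "Lal 0 (k + g * j)" using assms gpos by (simp add: Lal_def)
  show "Lidx 0 (k + g * j) = j" using gpos by (simp add: Lidx_def)
qed

lemma cw_inj: assumes "cw x = cw y" shows "\<forall>j<p. x j = y j"
proof -
  have "u y 0 \<in> cw x" using assms kpos unfolding cw_def vspan_def by (auto intro: V.span_base)
  then have "u y 0 = (\<Sum>i<k. vscale (u y 0 i) (u x i))" unfolding cw_def by (rule span_repr)
  also have "\<dots> = (\<Sum>i<k. vscale (if i = 0 then 1 else 0) (u x i))"
    by (intro sum.cong) (auto simp: u_low)
  also have "\<dots> = u x 0" using sum_delta_u kpos by blast
  finally have eq: "u y 0 = u x 0" .
  show ?thesis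
  proof (intro allI impI)
    fix j assume j: "j < p"
    have "u y 0 (k + g * j) = u x 0 (k + g * j)" using eq by simp
    moreover have "\<not> Qal 0 (k + g * j)" using Lal_0[OF j] Lal_lt_b Qal_ge not_le by blast
    ultimately show "x j = y j" using Lal_0[OF j] by (simp add: u_def ent_def)
  qed
qed

end

context cons
begin

lemma Lpiv:
  fixes x y z :: "nat \<Rightarrow> 'a::field"
  assumes i: "i < k" and j0: "j0 < p"
    and nz: "al * (y j0 - x j0) + be * (z j0 - x j0) \<noteq> 0"
    and zl: "\<forall>j<j0. al * (y j - x j) + be * (z j - x j) = 0"
  shows "(vscale al (u y i - u x i) + vscale be (u z i - u x i)) (k + i + g*j0) \<noteq> 0 \<and>
         (\<forall>pos < k + i + g*j0. (vscale al (u y i - u x i) + vscale be (u z i - u x i)) pos = 0)"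
proof -
  have "g * j0 + g \<le> g * p" using j0 by (metis Suc_leI add.commute mult_Suc_right mult_le_mono2)
  then have "g * j0 + g \<le> m * k" using gp by simp
  then have Pb: "k + i + g*j0 < b" using i gk by (simp add: b_def)
  have nQ: "\<not> Qal i pos" if "pos < b" for pos using Qal_ge that not_le by blast
  have LP: "Lal i (k + i + g*j0)" using Pb j0 gpos by (simp add: Lal_def)
  have LiP: "Lidx i (k + i + g*j0) = j0" using gpos by (simp add: Lidx_def)
  show ?thesis
  proof
    show "(vscale al (u y i - u x i) + vscale be (u z i - u x i)) (k + i + g*j0) \<noteq> 0"
      unfolding combo_apply using LP LiP nQ[OF Pb] nz by simp
    show "\<forall>pos < k + i + g*j0. (vscale al (u y i - u x i) + vscale be (u z i - u x i)) pos = 0"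
    proof (intro allI impI)
      fix pos assume pos: "pos < k + i + g*j0"
      have "\<not> Qal i pos" using nQ pos Pb by simp
      moreover have "al * (y (Lidx i pos) - x (Lidx i pos)) + be * (z (Lidx i pos) - x (Lidx i pos)) = 0"
        if L: "Lal i pos"
      proof -
        obtain j' where j': "pos - k - i = g * j'" using L by (auto simp: Lal_def)
        have "Lidx i pos = j'" using j' gpos by (simp add: Lidx_def)
        moreover have "g * j' < g * j0" using j' pos L unfolding Lal_def by linarith
        then have "j' < j0" using gpos by simp
        ultimately show ?thesis using zl by simp
      qed
      ultimately show "(vscale al (u y i - u x i) + vscale be (u z i - u x i)) pos = 0"
        unfolding combo_apply by simp
    qed
  qed
qed

lemma Qpiv:
  fixes x y z :: "nat \<Rightarrow> 'a::field"
  assumes r: "r < t" and j': "j' < g" and l0: "l0 < m"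
    and lin: "\<forall>j<p. al * (y j - x j) + be * (z j - x j) = 0"
    and nz: "al * ((y (r*m+l0))^2 - (x (r*m+l0))^2) + be * ((z (r*m+l0))^2 - (x (r*m+l0))^2) \<noteq> 0"
    and zl: "\<forall>l<l0. al * ((y (r*m+l))^2 - (x (r*m+l))^2) + be * ((z (r*m+l))^2 - (x (r*m+l))^2) = 0"
  shows "(vscale al (u y (r*g+j') - u x (r*g+j')) + vscale be (u z (r*g+j') - u x (r*g+j'))) (b + j' + l0) \<noteq> 0 \<and>
         (\<forall>pos < b + j' + l0. (vscale al (u y (r*g+j') - u x (r*g+j')) + vscale be (u z (r*g+j') - u x (r*g+j'))) pos = 0)"
proof -
  define i where "i = r*g + j'"
  have idiv: "i div g = r" and imod: "i mod g = j'" using j' gpos by (simp_all add: i_def)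
  have "i < (r+1) * g" using j' by (simp add: i_def)
  also have "\<dots> \<le> t * g" using r by (intro mult_le_mono1) simp
  finally have it: "i < t * g" .
  have nL: "\<not> Lal i pos" if "b \<le> pos" for pos using Lal_lt_b that not_le by blast
  have QP: "Qal i (b + j' + l0)" using it imod l0 by (simp add: Qal_def)
  have QiP: "Qidx i (b + j' + l0) = r*m + l0" using idiv imod by (simp add: Qidx_def)
  have Lz: "al * (y (Lidx i pos) - x (Lidx i pos)) + be * (z (Lidx i pos) - x (Lidx i pos)) = 0"
    if "Lal i pos" for pos using lin Lidx_lt[OF that] by simp
  show ?thesis unfolding i_def[symmetric]
  proof
    show "(vscale al (u y i - u x i) + vscale be (u z i - u x i)) (b + j' + l0) \<noteq> 0"
      unfolding combo_apply using QP QiP nL[of "b + j' + l0"] nz by simp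
    show "\<forall>pos < b + j' + l0. (vscale al (u y i - u x i) + vscale be (u z i - u x i)) pos = 0"
    proof (intro allI impI)
      fix pos assume pos: "pos < b + j' + l0"
      have "al * ((y (Qidx i pos))^2 - (x (Qidx i pos))^2) + be * ((z (Qidx i pos))^2 - (x (Qidx i pos))^2) = 0"
        if Q: "Qal i pos"
      proof -
        have "Qidx i pos = r*m + (pos - b - j')" using idiv imod by (simp add: Qidx_def)
        moreover have "pos - b - j' < l0" using pos Q imod unfolding Qal_def by linarith
        ultimately show ?thesis using zl by simp
      qed
      then show "(vscale al (u y i - u x i) + vscale be (u z i - u x i)) pos = 0"
        unfolding combo_apply using Lz by simp
    qed
  qed
qed

end
context cons
begin
lemma quad_id:
  fixes X D c :: "'a::field"
  shows "c * ((X + D)^2 - X^2) + -1 * ((X + c * D)^2 - X^2) = (c - c^2) * D^2"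
  by (simp add: power2_eq_square algebra_simps)

lemma three:
  fixes x y z :: "nat \<Rightarrow> 'a::field"
  assumes xy: "\<exists>j<p. x j \<noteq> y j" and xz: "\<exists>j<p. x j \<noteq> z j" and yz: "\<exists>j<p. y j \<noteq> z j"
  shows "k + (k + g) \<le> vdim (vspan (cw x \<union> cw y \<union> cw z))"
proof -
  define G where "G = u x ` {..<k} \<union> u y ` {..<k} \<union> u z ` {..<k}"
  have fG: "finite G" by (simp add: G_def)
  have sub: "u x ` {..<k} \<subseteq> G" "u y ` {..<k} \<subseteq> G" "u z ` {..<k} \<subseteq> G"
    unfolding G_def by blast+
  have sup: "u w ` {..<k} \<subseteq> cw w" for w :: "nat \<Rightarrow> 'a"
    unfolding cw_def vspan_def by (rule V.span_superset)
  have spanEq: "vspan (cw x \<union> cw y \<union> cw z) = V.span G"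
  proof
    have "cw x \<subseteq> V.span G" "cw y \<subseteq> V.span G" "cw z \<subseteq> V.span G"
      unfolding cw_def vspan_def by (rule V.span_mono, rule sub)+
    then have "cw x \<union> cw y \<union> cw z \<subseteq> V.span G" by (intro Un_least)
    then show "vspan (cw x \<union> cw y \<union> cw z) \<subseteq> V.span G"
      unfolding vspan_def by (rule V.span_minimal) simp
    have "G \<subseteq> cw x \<union> cw y \<union> cw z"
      unfolding G_def by (intro Un_mono sup)
    then show "V.span G \<subseteq> vspan (cw x \<union> cw y \<union> cw z)"
      unfolding vspan_def by (rule V.span_mono)
  qed
  have inGx: "u x i \<in> V.span G" if "i < k" for i
    using that by (intro V.span_base) (auto simp: G_def)
  have inG: "vscale al (u y i - u x i) + vscale be (u z i - u x i) \<in> V.span G" if "i < k" for i al be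
    using that by (intro V.span_add V.span_scale V.span_diff V.span_base) (auto simp: G_def)
  define d where "d j = y j - x j" for j
  define e where "e j = z j - x j" for j
  have Lw: "\<exists>w\<in>V.span G. w (k+i+g*j0) \<noteq> 0 \<and> (\<forall>pos<k+i+g*j0. w pos = 0)"
    if "i < k" "j0 < p" "al * d j0 + be * e j0 \<noteq> 0" "\<forall>j<j0. al * d j + be * e j = 0" for i al be j0
  proof -
    have "al * (y j0 - x j0) + be * (z j0 - x j0) \<noteq> 0" "\<forall>j<j0. al * (y j - x j) + be * (z j - x j) = 0"
      using that(3,4) by (simp_all add: d_def e_def)
    from Lpiv[OF that(1,2) this]
    show ?thesis by (intro bexI[OF _ inG[OF that(1)]])
  qed
  have low: "\<exists>w\<in>V.span G. w P \<noteq> 0 \<and> (\<forall>i<P. w i = 0)" if "P < k" for P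
    using inGx[OF that] that by (intro bexI[of _ "u x P"]) (auto simp: u_low)
  have dnz: "\<exists>j<p. d j \<noteq> 0" using xy by (auto simp: d_def)
  have gj: "g * j + g \<le> m * k" if "j < p" for j
  proof -
    have "g * j + g \<le> g * p" using that by (metis Suc_leI add.commute mult_Suc_right mult_le_mono2)
    then show ?thesis using gp by simp
  qed
  have "\<exists>Pos. finite Pos \<and> card Pos = k + k + g \<and> (\<forall>P\<in>Pos. \<exists>w\<in>V.span G. w P \<noteq> 0 \<and> (\<forall>i<P. w i = 0))"
  proof (cases "\<exists>c. \<forall>j<p. e j = c * d j")
    case True
    then obtain c where c: "\<forall>j<p. e j = c * d j" by blast
    obtain j0 where j0: "j0 < p" "d j0 \<noteq> 0" "\<forall>j<j0. d j = 0" using least_nz[OF dnz] by blast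
    have c0: "c \<noteq> 0" using c xz by (auto simp: e_def)
    have c1: "c \<noteq> 1" using c yz by (auto simp: e_def d_def)
    have "0 < m" using j0(1) unfolding p_def by (cases m) auto
    define r where "r = j0 div m"
    define l0 where "l0 = j0 mod m"
    have rm: "r * m + l0 = j0" by (simp add: r_def l0_def)
    have rt: "r < t" using j0 by (simp add: r_def p_def less_mult_imp_div_less)
    have l0m: "l0 < m" using \<open>0 < m\<close> by (simp add: l0_def)
    define Pos where "Pos = {..<k} \<union> {k+g*j0..<k+g*j0+k} \<union> {b+l0..<b+l0+g}"
    have "k + g*j0 + k \<le> b + l0" using gj[OF j0(1)] gk by (simp add: b_def)
    then have cP: "card Pos = k + k + g" unfolding Pos_def by (intro card3int) auto
    have hq: "c * ((y l)^2 - (x l)^2) + -1 * ((z l)^2 - (x l)^2) = (c - c^2) * (d l)^2" if "l < p" for l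
    proof -
      have "e l = c * d l" using c that by blast
      then have "z l = x l + c * d l" unfolding e_def by (simp add: algebra_simps)
      moreover have "y l = x l + d l" by (simp add: d_def)
      ultimately
      show ?thesis using quad_id[of c "x l" "d l"] by simp
    qed
    have "c - c^2 \<noteq> 0"
    proof
      assume "c - c^2 = 0"
      then have "c * (1 - c) = 0" by (simp add: power2_eq_square algebra_simps)
      then show False using c0 c1 by simp
    qed
    have fP: "finite Pos" by (simp add: Pos_def)
    have allP: "\<forall>P\<in>Pos. \<exists>w\<in>V.span G. w P \<noteq> 0 \<and> (\<forall>i<P. w i = 0)"
    proof
      fix P assume "P \<in> Pos"
      then consider "P < k" | "k+g*j0 \<le> P \<and> P < k+g*j0+k" | "b+l0 \<le> P \<and> P < b+l0+g"
        unfolding Pos_def by auto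
      then show "\<exists>w\<in>V.span G. w P \<noteq> 0 \<and> (\<forall>i<P. w i = 0)"
      proof cases
        case 1 then show ?thesis by (rule low)
      next
        case 2
        define i where "i = P - (k + g*j0)"
        have "i < k" "P = k + i + g*j0" using 2 by (auto simp: i_def)
        then show ?thesis using Lw[of i j0 1 0] j0 by simp
      next
        case 3
        define j' where "j' = P - (b + l0)"
        have j'g: "j' < g" and Pj: "P = b + j' + l0" using 3 by (auto simp: j'_def)
        have lin: "\<forall>j<p. c * (y j - x j) + -1 * (z j - x j) = 0"
          using c by (auto simp: d_def e_def)
        have pj0: "r*m + l0 < p" using rm j0 by simp
        have nz: "c * ((y (r*m+l0))^2 - (x (r*m+l0))^2) + -1 * ((z (r*m+l0))^2 - (x (r*m+l0))^2) \<noteq> 0"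
          using hq[OF pj0] rm j0 \<open>c - c^2 \<noteq> 0\<close> by simp
        have zl: "\<forall>l<l0. c * ((y (r*m+l))^2 - (x (r*m+l))^2) + -1 * ((z (r*m+l))^2 - (x (r*m+l))^2) = 0"
        proof (intro allI impI)
          fix l assume "l < l0"
          then have "r*m + l < j0" using rm by simp
          then show "c * ((y (r*m+l))^2 - (x (r*m+l))^2) + -1 * ((z (r*m+l))^2 - (x (r*m+l))^2) = 0"
            using hq[of "r*m+l"] j0 by simp
        qed
        have "r*g + j' < k"
        proof -
          have "r*g + j' < (r+1)*g" using j'g by simp
          also have "\<dots> \<le> t * g" using rt by (intro mult_le_mono1) simp
          finally show ?thesis using tg by simp
        qed
        from Qpiv[OF rt j'g l0m lin nz zl]
        show ?thesis unfolding Pj by (intro bexI[OF _ inG[OF \<open>r*g + j' < k\<close>]])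
      qed
    qed
    show ?thesis by (intro exI[of _ Pos] conjI fP cP allP)
  next
    case False
    obtain a1 b1 a2 b2 j1 j2 where jj: "j1 < j2" "j2 < p"
      "a1 * d j1 + b1 * e j1 \<noteq> 0" "\<forall>j<j1. a1 * d j + b1 * e j = 0"
      "a2 * d j2 + b2 * e j2 \<noteq> 0" "\<forall>j<j2. a2 * d j + b2 * e j = 0"
      using two_vals[OF dnz False] by blast
    define Pos where "Pos = {..<k} \<union> {k+g*j1..<k+g*j1+k} \<union> {k+g*j2+k-g..<k+g*j2+k-g+g}"
    have "g * j1 + g \<le> g * j2" using jj(1) by (metis Suc_leI add.commute mult_Suc_right mult_le_mono2)
    then have "k + g*j1 + k \<le> k+g*j2+k-g" using gk by simp
    then have cP: "card Pos = k + k + g" unfolding Pos_def by (intro card3int) auto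
    have fP: "finite Pos" by (simp add: Pos_def)
    have allP: "\<forall>P\<in>Pos. \<exists>w\<in>V.span G. w P \<noteq> 0 \<and> (\<forall>i<P. w i = 0)"
    proof
      fix P assume "P \<in> Pos"
      then consider "P < k" | "k+g*j1 \<le> P \<and> P < k+g*j1+k" | "k+g*j2+k-g \<le> P \<and> P < k+g*j2+k-g+g"
        unfolding Pos_def by auto
      then show "\<exists>w\<in>V.span G. w P \<noteq> 0 \<and> (\<forall>i<P. w i = 0)"
      proof cases
        case 1 then show ?thesis by (rule low)
      next
        case 2
        define i where "i = P - (k + g*j1)"
        have "i < k" "P = k + i + g*j1" using 2 by (auto simp: i_def)
        then show ?thesis using Lw[of i j1 a1 b1] jj by simp
      next
        case 3
        define i where "i = P - (k + g*j2)"
        have "i < k" "P = k + i + g*j2" using 3 gk by (auto simp: i_def)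
        then show ?thesis using Lw[of i j2 a2 b2] jj by simp
      qed
    qed
    show ?thesis by (intro exI[of _ Pos] conjI fP cP allP)
  qed
  then obtain Pos where Pos: "finite Pos" "card Pos = k + k + g"
    "\<forall>P\<in>Pos. \<exists>w\<in>V.span G. w P \<noteq> 0 \<and> (\<forall>i<P. w i = 0)" by blast
  have "card Pos \<le> V.dim (V.span G)" using dim_ge_pivots[OF fG Pos(1)] Pos(3) by blast
  then show ?thesis using Pos(2) spanEq by (simp add: vdim_def)
qed

end

lemma finite_ambient: "finite (ambient n :: (nat \<Rightarrow> 'a::{finite,field}) set)"
proof -
  have "ambient n \<subseteq> (\<lambda>xs i. if i < n then xs ! i else (0::'a)) ` {xs. set xs \<subseteq> UNIV \<and> length xs = n}"
  proof
    fix v :: "nat \<Rightarrow> 'a" assume "v \<in> ambient n"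
    then have "v = (\<lambda>i. if i < n then map v [0..<n] ! i else 0)"
      by (auto simp: ambient_def fun_eq_iff)
    then show "v \<in> (\<lambda>xs i. if i < n then xs ! i else (0::'a)) ` {xs. set xs \<subseteq> UNIV \<and> length xs = n}"
      by (intro image_eqI[of _ _ "map v [0..<n]"]) auto
  qed
  moreover have "finite {xs. set xs \<subseteq> (UNIV::'a set) \<and> length xs = n}"
    by (rule finite_lists_length_eq) simp
  ultimately show ?thesis by (meson finite_imageI finite_subset)
qed

lemma bdd_codes:
  "bdd_above {card C | C. covering_code \<alpha> n k \<delta> (C :: (nat \<Rightarrow> 'a::{finite,field}) set set)}"
proof (rule bdd_aboveI[of _ "card (Pow (ambient n :: (nat \<Rightarrow> 'a) set))"])
  fix c assume "c \<in> {card C | C. covering_code \<alpha> n k \<delta> (C :: (nat \<Rightarrow> 'a) set set)}"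
  then obtain C :: "(nat \<Rightarrow> 'a) set set" where C: "c = card C" "covering_code \<alpha> n k \<delta> C" by blast
  have "C \<subseteq> Pow (ambient n)" using C(2) by (auto simp: covering_code_def grassmannian_def)
  then show "c \<le> card (Pow (ambient n :: (nat \<Rightarrow> 'a) set))"
  proof -
    have "finite (Pow (ambient n :: (nat \<Rightarrow> 'a) set))" using finite_ambient by simp
    then show ?thesis using C(1) \<open>C \<subseteq> Pow (ambient n)\<close> by (simp add: card_mono)
  qed
qed


context cons
begin

lemma code_ok:
  "covering_code 3 n k (k+g) ((\<lambda>xs. cw (\<lambda>j. xs ! j)) ` {xs :: 'a::{finite,field} list. length xs = p})
   \<and> card ((\<lambda>xs. cw (\<lambda>j. xs ! j)) ` {xs :: 'a list. length xs = p}) = card (UNIV :: 'a set) ^ p"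
proof
  let ?C = "(\<lambda>xs. cw (\<lambda>j. xs ! j)) ` {xs :: 'a list. length xs = p}"
  show "covering_code 3 n k (k+g) ?C"
    unfolding covering_code_def
  proof (intro conjI allI impI)
    show "?C \<subseteq> grassmannian n k" by (rule image_subsetI) (rule cw_grass)
    fix A assume A: "A \<subseteq> ?C" "card A = 3"
    then obtain a1 a2 a3 where a: "A = {a1, a2, a3}" "a1 \<noteq> a2" "a2 \<noteq> a3" "a1 \<noteq> a3"
      using A(2) unfolding card_3_iff by blast
    obtain x1 x2 x3 where x: "length x1 = p" "a1 = cw (\<lambda>j. x1 ! j)" "length x2 = p" "a2 = cw (\<lambda>j. x2 ! j)"
      "length x3 = p" "a3 = cw (\<lambda>j. x3 ! j)" using A(1) a(1) by auto
    have dif: "\<exists>j<p. xa ! j \<noteq> xb ! j" if "cw (\<lambda>j. xa ! j) \<noteq> cw (\<lambda>j. xb ! j)" for xa xb :: "'a list"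
      using cw_cong that by blast
    have "k + (k + g) \<le> vdim (vspan (a1 \<union> a2 \<union> a3))"
      unfolding x(2,4,6) by (rule three; rule dif) (use a x in auto)
    then show "k + (k + g) \<le> vdim (vspan (\<Union>A))" by (simp add: a(1) Un_assoc)
  qed
  have inj: "inj_on (\<lambda>xs. cw (\<lambda>j. xs ! j)) {xs :: 'a list. length xs = p}"
  proof (rule inj_onI)
    fix xs ys :: "'a list" assume "xs \<in> {xs. length xs = p}" "ys \<in> {xs. length xs = p}"
      "cw (\<lambda>j. xs ! j) = cw (\<lambda>j. ys ! j)"
    then have "\<forall>j<p. xs ! j = ys ! j" using cw_inj[of "\<lambda>j. xs ! j" "\<lambda>j. ys ! j"] by simp
    then show "xs = ys" using \<open>xs \<in> _\<close> \<open>ys \<in> _\<close> by (auto intro!: nth_equalityI)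
  qed
  have "card {xs :: 'a list. length xs = p} = card (UNIV :: 'a set) ^ p"
    using card_lists_length_eq[of "UNIV :: 'a set" p] by simp
  then show "card ?C = card (UNIV :: 'a set) ^ p" using card_image[OF inj] by simp
qed

end


theorem mainTheorem13:
  fixes n k \<gamma> :: nat
  assumes "n > 0" "k > 0" "\<gamma> > 0" "n \<ge> 2 * k + \<gamma>"
  shows "B TYPE('a::{finite,field}) n k (k + \<gamma>) 3
           \<ge> card (UNIV :: 'a set) ^ (((n - 2 * k + 1) div (k + 1)) * (k div \<gamma>))"
proof -
  define m where "m = (n - 2 * k + 1) div (k + 1)"
  define t where "t = k div \<gamma>"
  have mn: "m * (k+1) + 2*k \<le> n + 1"
  proof -
    have "m * (k+1) \<le> n - 2 * k + 1" unfolding m_def by (rule div_times_less_eq_dividend)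
    then show ?thesis using assms(4) by linarith
  qed
  have tg: "t * \<gamma> \<le> k" unfolding t_def by (rule div_times_less_eq_dividend)
  let ?S = "{card C | C. covering_code 3 n k (k + \<gamma>) (C :: (nat \<Rightarrow> 'a) set set)}"
  have "card (UNIV :: 'a set) ^ (m * t) \<in> ?S"
  proof (cases "m * t = 0")
    case True
    interpret I: cons n k 1 0 0 using assms mn by unfold_locales auto
    define c :: "(nat \<Rightarrow> 'a) set" where "c = I.cw (\<lambda>_. 0)"
    have "covering_code 3 n k (k + \<gamma>) {c}"
      unfolding covering_code_def
    proof (intro conjI allI impI)
      show "{c} \<subseteq> grassmannian n k" using I.cw_grass by (simp add: c_def)
      fix A :: "(nat \<Rightarrow> 'a) set set" assume "A \<subseteq> {c}" "card A = 3"
      then have "card A \<le> card {c}" by (intro card_mono) auto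
      then show "k + (k + \<gamma>) \<le> vdim (vspan (\<Union>A))" using \<open>card A = 3\<close> by simp
    qed
    moreover have "card {c} = card (UNIV :: 'a set) ^ (m * t)" using True by auto
    ultimately show ?thesis by (intro CollectI exI[of _ "{c}"] conjI) auto
  next
    case False
    then have "0 < t" "0 < m" by auto
    then have "\<gamma> \<le> k" using assms(3) by (simp add: t_def div_greater_zero_iff)
    interpret I: cons n k \<gamma> m t using assms mn tg \<open>\<gamma> \<le> k\<close> by unfold_locales auto
    have "I.p = m * t" by (simp add: I.p_def)
    define C where "C = (\<lambda>xs. I.cw (\<lambda>j. xs ! j)) ` {xs :: 'a list. length xs = I.p}"
    have "covering_code 3 n k (k + \<gamma>) C" "card C = card (UNIV :: 'a set) ^ I.p"
      unfolding C_def using I.code_ok by blast+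
    then show ?thesis unfolding \<open>I.p = m * t\<close> by (intro CollectI exI[of _ C] conjI) auto
  qed
  then have "card (UNIV :: 'a set) ^ (m * t) \<le> Sup ?S" by (rule cSup_upper) (rule bdd_codes)
  then show ?thesis by (simp add: B_def m_def t_def)
qed


end
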